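(* Consider BPSK transmission of a binary linear code $\mathcal{C}$ of length $n$ over an AWGN channel, ML decoding with error event $E$, the all-zero codeword transmitted, and a family of regions $\{\mathcal{R}(r), r\in\mathcal{I}\}$ satisfying assumptions A1–A2 of the context with pdf $g$ of $R$. Let $f_u$ be the conditional union bound $$ f_u(r)=\sum_{1\le d\le n} A_d\,p_2(r,d), $$ where $\{A_d\}$ is the weight distribution of $\mathcal{C}$ and $p_2(r,d)$ is the conditional pairwise error probability defined in the context. Suppose that, conditional on $\underline y\in\partial\mathcal{R}(r)$, $\underline y$ is uniformly distributed over $\partial\mathcal{R}(r)$. If $f_u(r)$ is a non-decreasing and continuous function of $r$, then the optimal parameter $r_1$ minimizing over $r^*$ the bound $\int_{-\infty}^{r^*} f_u(r)g(r)\,{\rm d}r+\int_{r^*}^{+\infty} g(r)\,{\rm d}r$ does not depend on the SNR but only on the weight spectrum of the code.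
   Context: System model: codeword bits $c_t$ are mapped to $s_t=1-2c_t$; $\underline y=\underline s+\underline z$ with $\underline z$ i.i.d. $\mathcal{N}(0,\sigma^2)$ (SNR determined by $\sigma$); ML decoding chooses the nearest signal vector; the all-zero codeword's image $\underline s^{(0)}$ is transmitted. (A1) $\mathcal{R}(r_1)\subset\mathcal{R}(r_2)$ for $r_1<r_2$; boundaries $\partial\mathcal{R}(r)$ pairwise disjoint with union over $r\in\mathcal{I}$ equal to $\mathbb{R}^n$. (A2) $R:\underline y\mapsto r$ for $\underline y\in\partial\mathcal{R}(r)$ has pdf $g(r)$ ($g\equiv0$ outside $\mathcal{I}$). For $\underline s^{(1)}$ the image of a weight-$d$ codeword, $p_2(r,d)={\rm Pr}\{\|\underline y-\underline s^{(1)}\|\le\|\underline y-\underline s^{(0)}\|\mid\underline y\in\partial\mathcal{R}(r)\}$ (this depends only on $d$ by symmetry). $f_u$ is assumed non-trivial: $f_u(r)\le1$ for some $r$. *)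

theory Defs
  imports "HOL-Probability.Probability"
begin

text \<open>Binary words of length n = CARD('n); True stands for bit 1.\<close>

definition zero_word :: "bool ^ 'n" where
  "zero_word = (\<chi> i. False)"

definition xor_word :: "bool ^ 'n \<Rightarrow> bool ^ 'n \<Rightarrow> bool ^ 'n" where
  "xor_word a b = (\<chi> i. a $ i \<noteq> b $ i)"

definition binary_linear_code :: "(bool ^ 'n) set \<Rightarrow> bool" where
  "binary_linear_code C \<longleftrightarrow> zero_word \<in> C \<and> (\<forall>a\<in>C. \<forall>b\<in>C. xor_word a b \<in> C)"

definition hweight :: "bool ^ 'n \<Rightarrow> nat" where
  "hweight c = card {i. c $ i}"

definition weight_dist :: "(bool ^ 'n) set \<Rightarrow> nat \<Rightarrow> nat" where
  "weight_dist C d = card {c \<in> C. hweight c = d}"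

definition bpsk :: "bool ^ 'n \<Rightarrow> real ^ 'n" where
  "bpsk c = (\<chi> i. if c $ i then -1 else 1)"

definition awgn_output :: "real \<Rightarrow> real ^ 'n \<Rightarrow> (real ^ 'n) measure" where
  "awgn_output \<sigma> s = density lborel (\<lambda>y. ennreal (\<Prod>i\<in>UNIV. normal_density (s $ i) \<sigma> (y $ i)))"

definition pairwise_err :: "bool ^ 'n \<Rightarrow> (real ^ 'n) set" where
  "pairwise_err c = {y. dist y (bpsk c) \<le> dist y (bpsk (zero_word :: bool ^ 'n))}"

text \<open>Conditional pairwise error probability p_2(r,d), where U r is the conditional
  law of y given y in the boundary of R(r) (a representative codeword of weight d is used).\<close>
definition p2 :: "(real \<Rightarrow> (real ^ 'n) measure) \<Rightarrow> (bool ^ 'n) set \<Rightarrow> real \<Rightarrow> nat \<Rightarrow> real" where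
  "p2 U C r d = measure (U r) (pairwise_err (SOME c. c \<in> C \<and> hweight c = d))"

definition cond_union_bound :: "(real \<Rightarrow> (real ^ 'n) measure) \<Rightarrow> (bool ^ 'n) set \<Rightarrow> real \<Rightarrow> real" where
  "cond_union_bound U C r = (\<Sum>d = 1..CARD('n). real (weight_dist C d) * p2 U C r d)"

definition ub_bound :: "(real \<Rightarrow> real) \<Rightarrow> (real \<Rightarrow> real) \<Rightarrow> ereal \<Rightarrow> real" where
  "ub_bound f g t = (\<integral>r\<in>{r. ereal r \<le> t}. f r * g r \<partial>lborel) + (\<integral>r\<in>{r. t < ereal r}. g r \<partial>lborel)"

end

theory Submission imports Defs begin

lemma Basis_vec_axis: "(Basis :: (real^'n) set) = range (\<lambda>i. axis i 1)"
  by (auto simp: Basis_vec_def)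

lemma awgn_prob:
  assumes "\<sigma> > 0"
  shows "prob_space (awgn_output \<sigma> (bpsk (zero_word::bool^'n)))"
proof -
  have b: "bpsk (zero_word::bool^'n) $ i = 1" for i by (simp add: bpsk_def zero_word_def)
  have inj: "inj (\<lambda>i::'n. axis i (1::real))" by (auto simp: inj_def axis_eq_axis)
  have eq: "(\<Prod>i\<in>UNIV. normal_density (bpsk (zero_word::bool^'n) $ i) \<sigma> (y$i))
      = (\<Prod>b\<in>Basis. normal_density 1 \<sigma> (y \<bullet> b))" for y :: "real^'n"
    unfolding Basis_vec_axis by (subst prod.reindex[OF inj]) (simp add: b inner_axis)
  have n1: "(\<integral>\<^sup>+x. ennreal (normal_density 1 \<sigma> x) \<partial>lborel) = 1"
    using assms by (subst nn_integral_eq_integral) auto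
  have "(\<integral>\<^sup>+y. ennreal (\<Prod>i\<in>UNIV. normal_density (bpsk (zero_word::bool^'n) $ i) \<sigma> (y$i)) \<partial>lborel)
      = (\<integral>\<^sup>+(y::real^'n). (\<Prod>b\<in>Basis. ennreal (normal_density 1 \<sigma> (y \<bullet> b))) \<partial>lborel)"
    unfolding eq by (simp add: prod_ennreal)
  also have "\<dots> = (\<Prod>b\<in>(Basis::(real^'n) set). (\<integral>\<^sup>+x. ennreal (normal_density 1 \<sigma> x) \<partial>lborel))"
    by (rule nn_integral_lborel_prod) auto
  also have "\<dots> = 1" by (simp add: n1)
  finally have I: "(\<integral>\<^sup>+y. ennreal (\<Prod>i\<in>UNIV. normal_density (bpsk (zero_word::bool^'n) $ i) \<sigma> (y$i)) \<partial>lborel) = 1" .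
  show ?thesis
    apply (rule prob_spaceI)
    unfolding awgn_output_def
    apply (subst emeasure_density)
    using I by auto
qed

lemma ub_alt:
  fixes f G :: "real \<Rightarrow> real"
  assumes iG: "integrable lborel G" and ifG: "integrable lborel (\<lambda>r. f r * G r)"
  shows "ub_bound f G t = (\<integral>r. G r \<partial>lborel) + (\<integral>r. indicator {r. ereal r \<le> t} r * ((f r - 1) * G r) \<partial>lborel)"
proof -
  have S1: "{r. ereal r \<le> t} \<in> sets lborel" by measurable
  have S2: "{r. t < ereal r} \<in> sets lborel" by measurable
  have i1: "integrable lborel (\<lambda>r. indicator {r. ereal r \<le> t} r * (f r * G r))"
    using integrable_real_mult_indicator[OF S1 ifG] by (simp add: mult.commute)
  have i2: "integrable lborel (\<lambda>r. indicator {r. t < ereal r} r * G r)"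
    using integrable_real_mult_indicator[OF S2 iG] by (simp add: mult.commute)
  have i3: "integrable lborel (\<lambda>r. indicator {r. ereal r \<le> t} r * ((f r - 1) * G r))"
  proof -
    have e: "(\<lambda>r. indicator {r. ereal r \<le> t} r * ((f r - 1) * G r)) = (\<lambda>x. (f x * G x - G x) * indicator {r. ereal r \<le> t} x)"
      by (auto simp: fun_eq_iff algebra_simps)
    show ?thesis unfolding e
      by (rule integrable_real_mult_indicator[OF S1 Bochner_Integration.integrable_diff[OF ifG iG]])
  qed
  have "ub_bound f G t = (\<integral>r. indicator {r. ereal r \<le> t} r * (f r * G r) + indicator {r. t < ereal r} r * G r \<partial>lborel)"
    unfolding ub_bound_def set_lebesgue_integral_def
    by (simp add: Bochner_Integration.integral_add[OF i1 i2])
  also have "\<dots> = (\<integral>r. G r + indicator {r. ereal r \<le> t} r * ((f r - 1) * G r) \<partial>lborel)"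
    by (rule Bochner_Integration.integral_cong) (auto simp: indicator_def algebra_simps)
  also have "\<dots> = (\<integral>r. G r \<partial>lborel) + (\<integral>r. indicator {r. ereal r \<le> t} r * ((f r - 1) * G r) \<partial>lborel)"
    by (rule Bochner_Integration.integral_add[OF iG i3])
  finally show ?thesis .
qed

lemma key:
  fixes f G :: "real \<Rightarrow> real" and I :: "real set"
  assumes iG: "integrable lborel G" and ifG: "integrable lborel (\<lambda>r. f r * G r)"
    and Gnn: "\<And>r. 0 \<le> G r" and Gz: "\<And>r. r \<notin> I \<Longrightarrow> G r = 0"
    and ne: "\<exists>r\<in>I. f r \<le> 1" and mono: "mono_on I f"
    and r1: "r1 = Sup {ereal r | r. r \<in> I \<and> f r \<le> 1}"
  shows "ub_bound f G r1 \<le> ub_bound f G t"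
proof -
  define S where "S = {ereal r | r. r \<in> I \<and> f r \<le> 1}"
  have S1: "{r. ereal r \<le> t} \<in> sets lborel" for t by measurable
  have i3: "integrable lborel (\<lambda>r. indicator {r. ereal r \<le> t} r * ((f r - 1) * G r))" for t
  proof -
    have e: "(\<lambda>r. indicator {r. ereal r \<le> t} r * ((f r - 1) * G r)) = (\<lambda>x. (f x * G x - G x) * indicator {r. ereal r \<le> t} x)"
      by (auto simp: fun_eq_iff algebra_simps)
    show ?thesis unfolding e
      by (rule integrable_real_mult_indicator[OF S1 Bochner_Integration.integrable_diff[OF ifG iG]])
  qed
  have below: "f r \<le> 1" if "r \<in> I" "ereal r < r1" for r
  proof -
    from that r1 have "ereal r < Sup S" by (simp add: S_def)
    then obtain s where "s \<in> S" "ereal r < s" using less_Sup_iff by blast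
    then obtain s' where s': "s' \<in> I" "f s' \<le> 1" "r < s'" by (auto simp: S_def)
    have "f r \<le> f s'" using mono s' that(1) by (auto simp: mono_on_def)
    with s' show ?thesis by simp
  qed
  have above: "f r > 1" if "r \<in> I" "r1 < ereal r" for r
  proof (rule ccontr)
    assume "\<not> f r > 1"
    then have "ereal r \<in> S" using that by (auto simp: S_def)
    then have "ereal r \<le> Sup S" by (rule Sup_upper)
    with that r1 show False by (simp add: S_def)
  qed
  have "AE r in lborel. indicator {r. ereal r \<le> r1} r * ((f r - 1) * G r)
       \<le> indicator {r. ereal r \<le> t} r * ((f r - 1) * G r)"
    using AE_lborel_singleton[of "real_of_ereal r1"]
  proof eventually_elim
    case (elim r)
    have ne: "ereal r \<noteq> r1" using elim by (cases r1) auto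
    show ?case
    proof (cases "r \<in> I")
      case False then show ?thesis by (simp add: Gz)
    next
      case True
      show ?thesis
      proof (cases "ereal r < r1")
        case True
        have "(f r - 1) * G r \<le> 0" using below[OF \<open>r\<in>I\<close> True] Gnn[of r]
          by (simp add: mult_nonpos_nonneg)
        then show ?thesis using True by (auto simp: indicator_def)
      next
        case False
        then have "r1 < ereal r" using ne by auto
        then have "0 \<le> (f r - 1) * G r" using above[OF \<open>r\<in>I\<close>] Gnn[of r] by simp
        then show ?thesis using \<open>r1 < ereal r\<close> by (auto simp: indicator_def)
      qed
    qed
  qed
  then have "(\<integral>r. indicator {r. ereal r \<le> r1} r * ((f r - 1) * G r) \<partial>lborel)
       \<le> (\<integral>r. indicator {r. ereal r \<le> t} r * ((f r - 1) * G r) \<partial>lborel)"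
    by (intro integral_mono_AE i3)
  then show ?thesis by (simp add: ub_alt[OF iG ifG])
qed


lemma pairwise_err_borel: "pairwise_err c \<in> sets borel"
  unfolding pairwise_err_def by measurable

theorem theorem3:
  fixes C :: "(bool ^ 'n) set"
    and Rf :: "real ^ 'n \<Rightarrow> real"
    and I :: "real set"
    and g :: "real \<Rightarrow> real \<Rightarrow> real"
    and U :: "real \<Rightarrow> (real ^ 'n) measure"
  assumes code: "binary_linear_code C"
    and A1: "\<forall>y. Rf y \<in> I"
    and A2: "\<forall>\<sigma>>0. distributed (awgn_output \<sigma> (bpsk zero_word)) lborel Rf (\<lambda>r. ennreal (g \<sigma> r))"
    and g_nonneg: "\<forall>\<sigma>>0. \<forall>r. 0 \<le> g \<sigma> r"
    and g_zero: "\<forall>\<sigma>>0. \<forall>r. r \<notin> I \<longrightarrow> g \<sigma> r = 0"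
    and U_prob: "\<forall>r. prob_space (U r) \<and> sets (U r) = sets borel"
    and U_meas: "\<forall>A\<in>sets borel. (\<lambda>r. measure (U r) A) \<in> borel_measurable borel"
    and U_on_boundary: "\<forall>r\<in>I. measure (U r) (Rf -` {r}) = 1"
    and U_cond: "\<forall>\<sigma>>0. \<forall>A\<in>sets borel.
        measure (awgn_output \<sigma> (bpsk zero_word)) A = (\<integral>r. g \<sigma> r * measure (U r) A \<partial>lborel)"
    and nontriv: "\<exists>r\<in>I. cond_union_bound U C r \<le> 1"
    and mono: "mono_on I (cond_union_bound U C)"
    and cont: "continuous_on I (cond_union_bound U C)"
  shows "\<exists>r1 :: ereal. r1 = Sup {ereal r | r. r \<in> I \<and> cond_union_bound U C r \<le> 1} \<and>
           (\<forall>\<sigma>>0. \<forall>t :: ereal.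
              ub_bound (cond_union_bound U C) (g \<sigma>) r1 \<le> ub_bound (cond_union_bound U C) (g \<sigma>) t)"
proof (rule exI[where x="Sup {ereal r | r. r \<in> I \<and> cond_union_bound U C r \<le> 1}"], intro conjI refl allI impI)
  fix \<sigma> :: real and t :: ereal
  assume s: "\<sigma> > 0"
  let ?f = "cond_union_bound U C"
  let ?M = "awgn_output \<sigma> (bpsk (zero_word::bool^'n))"
  define B where "B = (\<Sum>d = 1..CARD('n). real (weight_dist C d))"
  interpret P: prob_space ?M by (rule awgn_prob[OF s])
  have D: "distributed ?M lborel Rf (\<lambda>r. ennreal (g \<sigma> r))" using A2 s by auto
  have Gnn: "\<And>r. 0 \<le> g \<sigma> r" using g_nonneg s by auto
  have iG: "integrable lborel (g \<sigma>)"
    using distributed_integrable[OF D, of "\<lambda>_. 1"] Gnn by simp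
  have p2m: "(\<lambda>r. p2 U C r d) \<in> borel_measurable borel" for d
    unfolding p2_def using U_meas pairwise_err_borel by blast
  have fm: "?f \<in> borel_measurable borel"
    unfolding cond_union_bound_def using p2m by measurable
  have p2b: "0 \<le> p2 U C r d \<and> p2 U C r d \<le> 1" for r d
  proof -
    interpret Q: prob_space "U r" using U_prob by auto
    show ?thesis unfolding p2_def by simp
  qed
  have fb: "\<bar>?f r\<bar> \<le> B" for r
  proof -
    have "0 \<le> ?f r" unfolding cond_union_bound_def using p2b by (intro sum_nonneg) auto
    moreover have "?f r \<le> B" unfolding cond_union_bound_def B_def
      by (intro sum_mono) (use p2b in \<open>auto intro: mult_left_le\<close>)
    ultimately show ?thesis by simp
  qed
  have ifG: "integrable lborel (\<lambda>r. ?f r * g \<sigma> r)"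
  proof (rule Bochner_Integration.integrable_bound[where f="\<lambda>r. B * g \<sigma> r"])
    show "integrable lborel (\<lambda>r. B * g \<sigma> r)" using iG by simp
    show "(\<lambda>r. ?f r * g \<sigma> r) \<in> borel_measurable lborel"
      using fm iG by measurable
    show "AE r in lborel. norm (?f r * g \<sigma> r) \<le> norm (B * g \<sigma> r)"
    proof (rule AE_I2)
      fix r
      have "\<bar>?f r\<bar> * g \<sigma> r \<le> B * g \<sigma> r" using fb[of r] Gnn[of r] by (rule mult_right_mono)
      moreover have "0 \<le> B" using fb[of r] by linarith
      ultimately show "norm (?f r * g \<sigma> r) \<le> norm (B * g \<sigma> r)"
        using Gnn[of r] by (simp add: abs_mult)
    qed
  qed
  show "ub_bound ?f (g \<sigma>) (Sup {ereal r | r. r \<in> I \<and> ?f r \<le> 1}) \<le> ub_bound ?f (g \<sigma>) t"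
    by (rule key[OF iG ifG Gnn _ nontriv mono refl]) (use g_zero s in auto)
qed

end
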